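(* The distributive law $\lambda$ of the free monad $\mathcal T_\Sigma$ over the cofree copointed functor $\langle\mathrm{Id}\times F,\pi_1\rangle$, induced by the abstract GSOS specification $\rho$ below, preserves the axioms of idempotent semirings. Consequently there is a distributive law $\kappa$ of the monad $\mathcal P_\omega((-)^* )$ over $\langle\mathrm{Id}\times F,\pi_1\rangle$ such that $i\circ q\colon\lambda\Rightarrow\kappa$ is a morphism of distributive laws. Here: - $q\colon T_\Sigma\Rightarrow T'$ is the quotient map to the free idempotent semiring monad; - $i\colon T'\Rightarrow\mathcal P_\omega((-)^* )$ is the monad isomorphism.
   Context: Work in $\mathrm{Set}$. Let $A$ be a set and $FX=2\times X^A$, where $2=\{0,1\}$. The signature functor is $\Sigma X=1+1+X\times X+X\times X$, with constants $\mathbf 0,\mathbf 1$ and binary operations $+,\cdot$. $\mathcal T_\Sigma$ is the free monad over $\Sigma$ ($T_\Sigma X$ = terms over $X$). The idempotent semiring axioms are: - $(x+y)+z=x+(y+z)$, $x+y=y+x$, $x+\mathbf 0=x$, $x+x=x$; - $(xy)z=x(yz)$, $\mathbf 1x=x=x\mathbf 1$; - $x(y+z)=xy+xz$, $(x+y)z=xz+yz$; - $\mathbf 0x=\mathbf 0=x\mathbf 0$. The monad $\mathcal P_\omega((-)^* )$ is defined by: - it sends $X$ to the set of finite sets of finite words over $X$; - $\mathcal P_\omega(f^* )(L)=\{f(x_1)\cdots f(x_n)\mid x_1\cdots x_n\in L\}$; - unit $x\mapsto\{x\}$; - multiplication $\mathcal L\mapsto\bigcup_{L_1\cdots L_n\in\mathcal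 L}\{w_1\cdots w_n\mid w_i\in L_i\}$. This monad is isomorphic to the quotient of $\mathcal T_\Sigma$ by the idempotent semiring axioms. A copointed functor is $\langle H,\epsilon\rangle$ with $\epsilon\colon H\Rightarrow\mathrm{Id}$. A distributive law over it is a distributive law $\lambda$ of the monad over $H$ satisfying $\epsilon_T\circ\lambda=T\epsilon$. Abstract GSOS specifications $\rho\colon\Sigma(\mathrm{Id}\times F)\Rightarrow FT_\Sigma$ correspond bijectively to distributive laws of $\mathcal T_\Sigma$ over $\langle\mathrm{Id}\times F,\pi_1\rangle$. Here $\rho$ is given by: - $\rho(\mathbf 0)=\langle 0,a\mapsto\mathbf 0\rangle$ and $\rho(\mathbf 1)=\langle 1,a\mapsto\mathbf 0\rangle$, where the empty sum is the term $\mathbf 0$; - $\rho(\langle x,o,f\rangle+\langle y,p,g\rangle)=\langle\max\{o,p\},a\mapsto f(a)+g(a)\rangle$; - $\rho(\langle x,o,f\rangle\cdot\langle y,p,g\rangle)=\langle\min\{o,p\},a\mapsto f(a)\cdot y\rangle$ if $o=0$; - $\rho(\langle x,o,f\rangle\cdot\langle y,p,g\rangle)=\langle\min\{o,p\},a\mapsto f(a)\cdot y+g(a)\rangle$ if $o=1$. $\lambda$ preserves an axiom $t_1=t_2$ if, for every set $X$ and every instantiation of its variables by elements of $X\times FX$, $\lambda_X(t_1)$ and $\lambda_X(t_2)$ are related by the lifting $\mathrm{Rel}(\mathrm{Id}\times F)$ of the congruence $\ker(q_X)$ on $T_\Sigma X$. This means their term components and their derivatives $a\mapsto(\cdot)$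 at every $a$ are identified modulo the idempotent semiring axioms, and their output bits are equal. A morphism of distributive laws $\tau\colon\lambda\Rightarrow\kappa$ is a monad morphism $\tau$ with $\kappa\circ\tau_H=H\tau\circ\lambda$. *)

theory Defs
  imports Main "HOL-Library.FSet"
begin

datatype 'x sig = SZero | SOne | SPlus 'x 'x | STimes 'x 'x

datatype 'x trm = Var 'x | Op "'x trm sig"

primrec tjoin :: "'x trm trm \<Rightarrow> 'x trm" where
  "tjoin (Var t) = t"
| "tjoin (Op s) = Op (map_sig tjoin s)"

definition tbind :: "'x trm \<Rightarrow> ('x \<Rightarrow> 'y trm) \<Rightarrow> 'y trm" where
  "tbind t s = tjoin (map_trm s t)"

text \<open>The alphabet A is the type 'a; the set 2 = {0,1} is rendered as bool (0 = False, 1 = True).\<close>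

type_synonym ('a, 'x) F = "bool \<times> ('a \<Rightarrow> 'x)"
type_synonym ('a, 'x) H = "'x \<times> bool \<times> ('a \<Rightarrow> 'x)"

definition Fmap :: "('x \<Rightarrow> 'y) \<Rightarrow> ('a, 'x) F \<Rightarrow> ('a, 'y) F" where
  "Fmap f b = (fst b, f \<circ> snd b)"

definition Hmap :: "('x \<Rightarrow> 'y) \<Rightarrow> ('a, 'x) H \<Rightarrow> ('a, 'y) H" where
  "Hmap f h = (f (fst h), Fmap f (snd h))"

fun rho :: "('a, 'x) H sig \<Rightarrow> ('a, 'x trm) F" where
  "rho SZero = (False, \<lambda>a. Op SZero)"
| "rho SOne = (True, \<lambda>a. Op SZero)"
| "rho (SPlus (x, o1, f) (y, p, g)) =
     (max o1 p, \<lambda>a. Op (SPlus (Var (f a)) (Var (g a))))"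
| "rho (STimes (x, o1, f) (y, p, g)) =
     (min o1 p, \<lambda>a. if \<not> o1 then Op (STimes (Var (f a)) (Var y))
                     else Op (SPlus (Op (STimes (Var (f a)) (Var y))) (Var (g a))))"

text \<open>The distributive law lambda of T_Sigma over Id * F induced by rho
  (the standard inductive extension of an abstract GSOS specification).\<close>

primrec lam :: "('a, 'x) H trm \<Rightarrow> ('a, 'x trm) H" where
  "lam (Var h) = Hmap Var h"
| "lam (Op s) = (Op (map_sig fst (map_sig lam s)), Fmap tjoin (rho (map_sig lam s)))"

abbreviation tzero :: "'x trm" where "tzero \<equiv> Op SZero"
abbreviation tone :: "'x trm" where "tone \<equiv> Op SOne"
abbreviation tplus :: "'x trm \<Rightarrow> 'x trm \<Rightarrow> 'x trm" where "tplus t s \<equiv> Op (SPlus t s)"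
abbreviation ttimes :: "'x trm \<Rightarrow> 'x trm \<Rightarrow> 'x trm" where "ttimes t s \<equiv> Op (STimes t s)"

definition isr_axioms :: "(nat trm \<times> nat trm) set" where
  "isr_axioms =
    (let x = Var 0; y = Var 1; z = Var 2 in
     { (tplus (tplus x y) z, tplus x (tplus y z)),
       (tplus x y, tplus y x),
       (tplus x tzero, x),
       (tplus x x, x),
       (ttimes (ttimes x y) z, ttimes x (ttimes y z)),
       (ttimes tone x, x),
       (ttimes x tone, x),
       (ttimes x (tplus y z), tplus (ttimes x y) (ttimes x z)),
       (ttimes (tplus x y) z, tplus (ttimes x z) (ttimes y z)),
       (ttimes tzero x, tzero),
       (ttimes x tzero, tzero) })"

text \<open>The congruence ker(q_X) on T_Sigma X: the equational theory generated by the axioms.\<close>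

inductive isr_eq :: "'x trm \<Rightarrow> 'x trm \<Rightarrow> bool" where
  ax: "(l, r) \<in> isr_axioms \<Longrightarrow> isr_eq (tbind l s) (tbind r s)"
| refl: "isr_eq t t"
| sym: "isr_eq t s \<Longrightarrow> isr_eq s t"
| trans: "isr_eq t s \<Longrightarrow> isr_eq s u \<Longrightarrow> isr_eq t u"
| cong_plus: "isr_eq t t' \<Longrightarrow> isr_eq s s' \<Longrightarrow> isr_eq (tplus t s) (tplus t' s')"
| cong_times: "isr_eq t t' \<Longrightarrow> isr_eq s s' \<Longrightarrow> isr_eq (ttimes t s) (ttimes t' s')"

definition relH :: "('x \<Rightarrow> 'x \<Rightarrow> bool) \<Rightarrow> ('a, 'x) H \<Rightarrow> ('a, 'x) H \<Rightarrow> bool" where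
  "relH R h k \<longleftrightarrow> R (fst h) (fst k) \<and> fst (snd h) = fst (snd k)
                   \<and> (\<forall>a. R (snd (snd h) a) (snd (snd k) a))"

definition preserves_axiom :: "nat trm \<Rightarrow> nat trm \<Rightarrow> 'x itself \<Rightarrow> 'a itself \<Rightarrow> bool" where
  "preserves_axiom t1 t2 _ _ \<longleftrightarrow>
     (\<forall>v :: nat \<Rightarrow> ('a, 'x) H. relH isr_eq (lam (map_trm v t1)) (lam (map_trm v t2)))"

type_synonym 'x PW = "'x list fset"

definition PWmap :: "('x \<Rightarrow> 'y) \<Rightarrow> 'x PW \<Rightarrow> 'y PW" where
  "PWmap f L = map f |`| L"

definition PWunit :: "'x \<Rightarrow> 'x PW" where
  "PWunit x = {|[x]|}"

primrec wprod :: "'x PW list \<Rightarrow> 'x PW" where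
  "wprod [] = {|[]|}"
| "wprod (L # Ls) = ffUnion ((\<lambda>u. (\<lambda>v. u @ v) |`| wprod Ls) |`| L)"

definition PWmult :: "'x PW PW \<Rightarrow> 'x PW" where
  "PWmult M = ffUnion (wprod |`| M)"

text \<open>The composite i o q : T_Sigma => P_omega((-)^*): the quotient map to the free idempotent
  semiring followed by the isomorphism, i.e. the interpretation of terms as finite languages.\<close>

primrec iq :: "'x trm \<Rightarrow> 'x PW" where
  "iq (Var x) = PWunit x"
| "iq (Op s) = (case map_sig iq s of
      SZero \<Rightarrow> {||}
    | SOne \<Rightarrow> {|[]|}
    | SPlus L K \<Rightarrow> L |\<union>| K
    | STimes L K \<Rightarrow> wprod [L, K])"

text \<open>Candidate kappa: since i o q is (componentwise) surjective, a kappa with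
  kappa o (i o q)_H = H(i o q) o lambda is necessarily this one.\<close>

definition kappa :: "('a, 'x) H PW \<Rightarrow> ('a, 'x PW) H" where
  "kappa L = Hmap iq (lam (SOME t. iq t = L))"

end

theory Submission imports Defs begin

abbreviation D :: "('a,'x) H trm \<Rightarrow> 'a \<Rightarrow> 'x trm" where "D t \<equiv> snd (snd (lam t))"
abbreviation Ob :: "('a,'x) H trm \<Rightarrow> bool" where "Ob t \<equiv> fst (snd (lam t))"
abbreviation T1 :: "('a,'x) H trm \<Rightarrow> 'x trm" where "T1 t \<equiv> fst (lam t)"

lemma lam_zero: "lam tzero = (tzero, False, \<lambda>a. tzero)"
  by (simp add: Fmap_def o_def)
lemma lam_one: "lam tone = (tone, True, \<lambda>a. tzero)"
  by (simp add: Fmap_def o_def)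
lemma lam_plus: "lam (tplus x y) = (tplus (T1 x) (T1 y), Ob x \<or> Ob y, \<lambda>a. tplus (D x a) (D y a))"
  by (cases "lam x"; cases "lam y") (auto simp add: Fmap_def o_def max_def)
lemma lam_times: "lam (ttimes x y) = (ttimes (T1 x) (T1 y), Ob x \<and> Ob y,
   \<lambda>a. if Ob x then tplus (ttimes (D x a) (T1 y)) (D y a) else ttimes (D x a) (T1 y))"
  by (cases "lam x"; cases "lam y") (auto simp add: Fmap_def o_def min_def)


definition sub3 :: "'x trm \<Rightarrow> 'x trm \<Rightarrow> 'x trm \<Rightarrow> nat \<Rightarrow> 'x trm" where
  "sub3 x y z n = (if n = 0 then x else if n = 1 then y else z)"

lemma axi: "(l, r) \<in> isr_axioms \<Longrightarrow> isr_eq (tbind l (sub3 x y z)) (tbind r (sub3 x y z))"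
  by (rule isr_eq.ax)


lemma e_passoc: "isr_eq (tplus (tplus x y) z) (tplus x (tplus y z))"
  using axi[of "tplus (tplus (Var 0) (Var 1)) (Var 2)" "tplus (Var 0) (tplus (Var 1) (Var 2))" x y z] by (simp add: isr_axioms_def Let_def tbind_def sub3_def)
lemma e_pcomm: "isr_eq (tplus x y) (tplus y x)"
  using axi[of "tplus (Var 0) (Var 1)" "tplus (Var 1) (Var 0)" x y x] by (simp add: isr_axioms_def Let_def tbind_def sub3_def)
lemma e_pzero: "isr_eq (tplus x tzero) x"
  using axi[of "tplus (Var 0) tzero" "Var 0" x x x] by (simp add: isr_axioms_def Let_def tbind_def sub3_def)
lemma e_pidem: "isr_eq (tplus x x) x"
  using axi[of "tplus (Var 0) (Var 0)" "Var 0" x x x] by (simp add: isr_axioms_def Let_def tbind_def sub3_def)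
lemma e_tassoc: "isr_eq (ttimes (ttimes x y) z) (ttimes x (ttimes y z))"
  using axi[of "ttimes (ttimes (Var 0) (Var 1)) (Var 2)" "ttimes (Var 0) (ttimes (Var 1) (Var 2))" x y z] by (simp add: isr_axioms_def Let_def tbind_def sub3_def)
lemma e_onel: "isr_eq (ttimes tone x) x"
  using axi[of "ttimes tone (Var 0)" "Var 0" x x x] by (simp add: isr_axioms_def Let_def tbind_def sub3_def)
lemma e_oner: "isr_eq (ttimes x tone) x"
  using axi[of "ttimes (Var 0) tone" "Var 0" x x x] by (simp add: isr_axioms_def Let_def tbind_def sub3_def)
lemma e_distl: "isr_eq (ttimes x (tplus y z)) (tplus (ttimes x y) (ttimes x z))"
  using axi[of "ttimes (Var 0) (tplus (Var 1) (Var 2))" "tplus (ttimes (Var 0) (Var 1)) (ttimes (Var 0) (Var 2))" x y z] by (simp add: isr_axioms_def Let_def tbind_def sub3_def)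
lemma e_distr: "isr_eq (ttimes (tplus x y) z) (tplus (ttimes x z) (ttimes y z))"
  using axi[of "ttimes (tplus (Var 0) (Var 1)) (Var 2)" "tplus (ttimes (Var 0) (Var 2)) (ttimes (Var 1) (Var 2))" x y z] by (simp add: isr_axioms_def Let_def tbind_def sub3_def)
lemma e_zl: "isr_eq (ttimes tzero x) tzero"
  using axi[of "ttimes tzero (Var 0)" "tzero" x x x] by (simp add: isr_axioms_def Let_def tbind_def sub3_def)
lemma e_zr: "isr_eq (ttimes x tzero) tzero"
  using axi[of "ttimes (Var 0) tzero" "tzero" x x x] by (simp add: isr_axioms_def Let_def tbind_def sub3_def)


lemmas tr = isr_eq.trans
lemmas cp = isr_eq.cong_plus
lemmas ct = isr_eq.cong_times
lemmas rf = isr_eq.refl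
lemmas sy = isr_eq.sym

lemma e_swap: "isr_eq (tplus (tplus a b) (tplus c d)) (tplus (tplus a c) (tplus b d))"
proof -
  have 1: "isr_eq (tplus (tplus a b) (tplus c d)) (tplus a (tplus b (tplus c d)))" by (rule e_passoc)
  have 2: "isr_eq (tplus b (tplus c d)) (tplus c (tplus b d))"
    by (rule tr[OF sy[OF e_passoc] tr[OF cp[OF e_pcomm rf] e_passoc]])
  show ?thesis by (rule tr[OF 1 tr[OF cp[OF rf 2] sy[OF e_passoc]]])
qed

lemma e_rot: "isr_eq (tplus (tplus a b) c) (tplus (tplus a c) b)"
  by (rule tr[OF e_passoc tr[OF cp[OF rf e_pcomm] sy[OF e_passoc]]])

lemma e_dup: "isr_eq (tplus (tplus a b) c) (tplus (tplus a c) (tplus b c))"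
  by (rule sy[OF tr[OF e_swap cp[OF rf e_pidem]]])

lemma p1: "relH isr_eq (lam (tplus (tplus x y) z)) (lam (tplus x (tplus y z)))"
  unfolding relH_def lam_plus by (auto intro: e_passoc)
lemma p2: "relH isr_eq (lam (tplus x y)) (lam (tplus y x))"
  unfolding relH_def lam_plus by (auto intro: e_pcomm)
lemma p3: "relH isr_eq (lam (tplus x tzero)) (lam x)"
  unfolding relH_def lam_plus lam_zero by (auto intro: e_pzero)
lemma p4: "relH isr_eq (lam (tplus x x)) (lam x)"
  unfolding relH_def lam_plus by (auto intro: e_pidem)
lemma p5: "relH isr_eq (lam (ttimes (ttimes x y) z)) (lam (ttimes x (ttimes y z)))"
  unfolding relH_def lam_times
  by (auto intro: e_tassoc tr[OF cp[OF e_distr rf] tr[OF e_passoc cp[OF e_tassoc rf]]]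
     tr[OF e_distr cp[OF e_tassoc rf]])
lemma p6: "relH isr_eq (lam (ttimes tone x)) (lam x)"
  unfolding relH_def lam_times lam_one
  by (auto intro: e_onel tr[OF cp[OF e_zl rf] tr[OF e_pcomm e_pzero]])
lemma p7: "relH isr_eq (lam (ttimes x tone)) (lam x)"
  unfolding relH_def lam_times lam_one
  by (auto intro: e_oner tr[OF e_pzero e_oner])
lemma p8: "relH isr_eq (lam (ttimes x (tplus y z))) (lam (tplus (ttimes x y) (ttimes x z)))"
  unfolding relH_def lam_times lam_plus
  by (auto intro: e_distl tr[OF cp[OF e_distl rf] e_swap])
lemma p9: "relH isr_eq (lam (ttimes (tplus x y) z)) (lam (tplus (ttimes x z) (ttimes y z)))"
  unfolding relH_def lam_times lam_plus
  by (auto intro: e_distr tr[OF cp[OF e_distr rf] e_dup] tr[OF cp[OF e_distr rf] e_rot]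
        tr[OF cp[OF e_distr rf] e_passoc])
lemma p10: "relH isr_eq (lam (ttimes tzero x)) (lam tzero)"
  unfolding relH_def lam_times lam_zero by (auto intro: e_zl)
lemma p11: "relH isr_eq (lam (ttimes x tzero)) (lam tzero)"
  unfolding relH_def lam_times lam_zero by (auto intro: e_zr tr[OF e_pzero e_zr])

lemma part1: "\<forall>(t1, t2) \<in> isr_axioms. preserves_axiom t1 t2 TYPE('x) TYPE('a)"
  unfolding isr_axioms_def Let_def preserves_axiom_def
  by (simp del: lam.simps add: p1 p2 p3 p4 p5 p6 p7 p8 p9 p10 p11)


lemma mem_ffUnion[simp]: "x |\<in>| ffUnion A \<longleftrightarrow> (\<exists>B. B |\<in>| A \<and> x |\<in>| B)"
  by (auto simp add: ffUnion.rep_eq)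
lemma mem_wprod_Cons: "w |\<in>| wprod (L # Ls) \<longleftrightarrow> (\<exists>u v. w = u @ v \<and> u |\<in>| L \<and> v |\<in>| wprod Ls)"
  by (simp only: wprod.simps mem_ffUnion) (auto simp: fimage_iff)
lemma mem_wprod2[simp]: "w |\<in>| wprod [L, K] \<longleftrightarrow> (\<exists>u v. w = u @ v \<and> u |\<in>| L \<and> v |\<in>| K)"
  by (simp only: mem_wprod_Cons wprod.simps(1)) auto
lemma mem_wprod_Nil[simp]: "w |\<in>| wprod [] \<longleftrightarrow> w = []" by simp
lemma mem_wprod_app: "w |\<in>| wprod (Ls @ Ks) \<longleftrightarrow> (\<exists>u v. w = u @ v \<and> u |\<in>| wprod Ls \<and> v |\<in>| wprod Ks)"
proof (induction Ls arbitrary: w)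
  case Nil then show ?case by simp
next
  case (Cons L Ls)
  show ?case
    apply (simp only: append_Cons mem_wprod_Cons Cons.IH)
    apply (metis append.assoc)
    done
qed
lemma mem_wprod_single[simp]: "w |\<in>| wprod [L] \<longleftrightarrow> w |\<in>| L"
  by (simp only: mem_wprod_Cons mem_wprod_Nil) auto

lemma mem_PWmap: "w |\<in>| PWmap f L \<longleftrightarrow> (\<exists>u. w = map f u \<and> u |\<in>| L)"
  by (auto simp: PWmap_def fimage_iff)
lemma mem_PWmult: "w |\<in>| PWmult M \<longleftrightarrow> (\<exists>Ls. Ls |\<in>| M \<and> w |\<in>| wprod Ls)"
  by (auto simp: PWmult_def fimage_iff)
lemma mem_PWunit[simp]: "w |\<in>| PWunit x \<longleftrightarrow> w = [x]"
  by (simp add: PWunit_def)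

lemma iq_zero[simp]: "iq tzero = {||}" by simp
lemma iq_one[simp]: "iq tone = {|[]|}" by simp
lemma iq_plus[simp]: "iq (tplus a b) = iq a |\<union>| iq b" by simp
lemma iq_times[simp]: "iq (ttimes a b) = wprod [iq a, iq b]" by simp

lemma map_wprod: "PWmap f (wprod [L, K]) = wprod [PWmap f L, PWmap f K]"
  apply (rule fset_eqI)
  apply (simp add: mem_PWmap del: wprod.simps)
  apply (auto simp: map_eq_append_conv)
   apply (metis map_append)+
  done

lemma iq_map: "iq (map_trm f t) = PWmap f (iq t)"
proof (induction t)
  case (Var x) then show ?case by (simp add: PWmap_def PWunit_def)
next
  case (Op s) then show ?case
  proof (cases s)
    case (STimes a b) then show ?thesis using Op by (simp del: wprod.simps add: map_wprod)
  qed (auto simp: PWmap_def)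
qed

lemma mem_bindPW: "w |\<in>| PWmult (PWmap g L) \<longleftrightarrow> (\<exists>u. u |\<in>| L \<and> w |\<in>| wprod (map g u))"
  by (auto simp: mem_PWmult mem_PWmap)

lemma iq_join: "iq (tjoin tt) = PWmult (PWmap iq (iq tt))"
proof (induction tt)
  case (Var t) then show ?case
    by (intro fset_eqI) (simp add: mem_bindPW del: wprod.simps)
next
  case (Op s) then show ?case
  proof (cases s)
    case SZero then show ?thesis by (simp add: PWmult_def PWmap_def)
  next
    case SOne then show ?thesis by (simp add: PWmult_def PWmap_def)
  next
    case (SPlus a b) then show ?thesis using Op by (simp add: PWmult_def PWmap_def fimage_funion)
  next
    case (STimes a b)
    then have ia: "iq (tjoin a) = PWmult (PWmap iq (iq a))" and ib: "iq (tjoin b) = PWmult (PWmap iq (iq b))"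
      using Op by auto
    have e: "iq (tjoin (Op s)) = wprod [iq (tjoin a), iq (tjoin b)]" by (simp add: STimes del: wprod.simps)
    have e2: "iq (Op s) = wprod [iq a, iq b]" by (simp add: STimes del: wprod.simps)
    show ?thesis
    proof (intro fset_eqI iffI)
      fix w assume "w |\<in>| iq (tjoin (Op s))"
      then obtain u v u' v' where "w = u @ v" "u' |\<in>| iq a" "u |\<in>| wprod (map iq u')"
          "v' |\<in>| iq b" "v |\<in>| wprod (map iq v')"
        unfolding e ia ib mem_wprod2 mem_bindPW by blast
      then show "w |\<in>| PWmult (PWmap iq (iq (Op s)))"
        unfolding e2 mem_bindPW mem_wprod2
        by (intro exI[of _ "u' @ v'"]) (auto simp: mem_wprod_app simp del: wprod.simps)
    next
      fix w assume "w |\<in>| PWmult (PWmap iq (iq (Op s)))"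
      then obtain u' v' where "u' |\<in>| iq a" "v' |\<in>| iq b" "w |\<in>| wprod (map iq (u' @ v'))"
        unfolding e2 mem_bindPW mem_wprod2 by blast
      then obtain u v where "w = u @ v" "u |\<in>| wprod (map iq u')" "v |\<in>| wprod (map iq v')"
        unfolding map_append mem_wprod_app by blast
      then show "w |\<in>| iq (tjoin (Op s))"
        unfolding e ia ib mem_wprod2 mem_bindPW using \<open>u' |\<in>| iq a\<close> \<open>v' |\<in>| iq b\<close> by blast
    qed
  qed
qed

lemma Hmap_comp[simp]: "Hmap f (Hmap g h) = Hmap (f \<circ> g) h"
  by (simp add: Hmap_def Fmap_def o_assoc)
lemma Fmap_comp[simp]: "Fmap f (Fmap g h) = Fmap (f \<circ> g) h"
  by (simp add: Fmap_def o_assoc)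

lemma Hmap_id[simp]: "Hmap (\<lambda>x. x) h = h"
  by (simp add: Hmap_def Fmap_def o_def)

lemma fst_lam: "fst (lam t) = map_trm fst t"
proof (induction t)
  case (Var x) then show ?case by (simp add: Hmap_def)
next
  case (Op s) then show ?case by (cases s) auto
qed

lemma tjoin_nat: "tjoin (map_trm (map_trm g) t) = map_trm g (tjoin t)"
proof (induction t)
  case (Op s) then show ?case by (cases s) auto
qed simp

lemma tjoin_assoc: "tjoin (map_trm tjoin t) = tjoin (tjoin t)"
proof (induction t)
  case (Op s) then show ?case by (cases s) auto
qed simp

lemma rho_nat: "rho (map_sig (Hmap g) s) = Fmap (map_trm g) (rho s)"
proof (cases s)
  case (SPlus h k) then show ?thesis
    by (cases h; cases k) (simp add: Hmap_def Fmap_def o_def)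
next
  case (STimes h k) then show ?thesis
    by (cases h; cases k) (auto simp add: Hmap_def Fmap_def o_def fun_eq_iff)
qed (simp_all add: Fmap_def o_def)

lemma lam_nat: "lam (map_trm (Hmap g) t) = Hmap (map_trm g) (lam t)"
proof (induction t)
  case (Var x) then show ?case by (simp add: o_def)
next
  case (Op s)
  have 1: "map_sig lam (map_sig (map_trm (Hmap g)) s) = map_sig (Hmap (map_trm g)) (map_sig lam s)"
    using Op by (cases s) auto
  have tn: "tjoin \<circ> map_trm (map_trm g) = map_trm g \<circ> tjoin" by (rule ext) (simp add: tjoin_nat)
  have fs: "map_sig fst (map_sig (Hmap (map_trm g)) X) = map_sig (map_trm g) (map_sig fst X)" for X :: "('b, 'c trm) H sig"
    by (cases X) (auto simp: Hmap_def)
  show ?case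
    apply (simp only: trm.map lam.simps 1 rho_nat Fmap_comp tn fs)
    apply (simp add: Hmap_def Fmap_def o_assoc)
    done
qed

lemma lam_mult: "lam (tjoin tt) = Hmap tjoin (lam (map_trm lam tt))"
proof (induction tt)
  case (Var t) then show ?case by (simp add: o_def)
next
  case (Op s)
  have 1: "map_sig lam (map_sig tjoin s) = map_sig (Hmap tjoin) (map_sig lam (map_sig (map_trm lam) s))"
    using Op by (cases s) auto
  show ?case
    apply (simp only: tjoin.simps lam.simps 1 rho_nat)
    apply (simp add: Hmap_def Fmap_def o_def tjoin_assoc)
    apply (cases s; simp add: Hmap_def)
    done
qed


fun dw :: "'a \<Rightarrow> ('a, 'x) H list \<Rightarrow> 'x PW" where
  "dw a [] = {||}"
| "dw a (h # w) = finsert (snd (snd h) a # map fst w) (if fst (snd h) then dw a w else {||})"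

definition Ow :: "('a, 'x) H PW \<Rightarrow> bool" where
  "Ow L \<longleftrightarrow> (\<exists>w. w |\<in>| L \<and> (\<forall>h\<in>set w. fst (snd h)))"

definition Dl :: "'a \<Rightarrow> ('a, 'x) H PW \<Rightarrow> 'x PW" where
  "Dl a L = ffUnion (dw a |`| L)"

definition Kf :: "('a, 'x) H PW \<Rightarrow> ('a, 'x PW) H" where
  "Kf L = (PWmap fst L, Ow L, \<lambda>a. Dl a L)"

lemma mem_dw_app: "w |\<in>| dw a (u @ v) \<longleftrightarrow>
   (\<exists>p. w = p @ map fst v \<and> p |\<in>| dw a u) \<or> ((\<forall>h\<in>set u. fst (snd h)) \<and> w |\<in>| dw a v)"
  by (induction u arbitrary: w) auto

lemma mem_Dl: "w |\<in>| Dl a L \<longleftrightarrow> (\<exists>u. u |\<in>| L \<and> w |\<in>| dw a u)"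
  by (auto simp: Dl_def fimage_iff)

lemma Ow_zero[simp]: "Ow {||} = False" by (simp add: Ow_def)
lemma Ow_one[simp]: "Ow {|[]|} = True" by (simp add: Ow_def)
lemma Ow_un[simp]: "Ow (L |\<union>| K) = (Ow L \<or> Ow K)" by (auto simp add: Ow_def)
lemma Ow_unit[simp]: "Ow (PWunit h) = fst (snd h)" by (simp add: Ow_def)
lemma Ow_times[simp]: "Ow (wprod [L, K]) = (Ow L \<and> Ow K)"
proof
  assume "Ow (wprod [L, K])"
  then obtain u v where "u |\<in>| L" "v |\<in>| K" "\<forall>h\<in>set (u @ v). fst (snd h)"
    unfolding Ow_def mem_wprod2 by blast
  then show "Ow L \<and> Ow K"
    unfolding Ow_def by (metis Un_iff set_append)
next
  assume "Ow L \<and> Ow K"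
  then obtain u v where "u |\<in>| L" "\<forall>h\<in>set u. fst (snd h)" "v |\<in>| K" "\<forall>h\<in>set v. fst (snd h)"
    unfolding Ow_def by blast
  then show "Ow (wprod [L, K])" unfolding Ow_def mem_wprod2
    by (intro exI[of _ "u @ v"]) auto
qed

lemma Dl_zero[simp]: "Dl a {||} = {||}" by (simp add: Dl_def)
lemma Dl_one[simp]: "Dl a {|[]|} = {||}" by (simp add: Dl_def)
lemma Dl_un[simp]: "Dl a (L |\<union>| K) = Dl a L |\<union>| Dl a K" by (simp add: Dl_def fimage_funion)
lemma Dl_unit[simp]: "Dl a (PWunit h) = PWunit (snd (snd h) a)" by (simp add: Dl_def PWunit_def)
lemma Dl_times: "Dl a (wprod [L, K]) = wprod [Dl a L, PWmap fst K] |\<union>| (if Ow L then Dl a K else {||})"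
proof (rule fset_eqI)
  fix w
  show "w |\<in>| Dl a (wprod [L, K]) \<longleftrightarrow> w |\<in>| wprod [Dl a L, PWmap fst K] |\<union>| (if Ow L then Dl a K else {||})"
  proof
    assume "w |\<in>| Dl a (wprod [L, K])"
    then obtain u v where uv: "u |\<in>| L" "v |\<in>| K" "w |\<in>| dw a (u @ v)"
      unfolding mem_Dl mem_wprod2 by blast
    then show "w |\<in>| wprod [Dl a L, PWmap fst K] |\<union>| (if Ow L then Dl a K else {||})"
      unfolding mem_dw_app by (auto simp: mem_Dl mem_PWmap Ow_def simp del: wprod.simps)
  next
    assume "w |\<in>| wprod [Dl a L, PWmap fst K] |\<union>| (if Ow L then Dl a K else {||})"
    then consider (A) p v u where "w = p @ map fst v" "v |\<in>| K" "u |\<in>| L" "p |\<in>| dw a u"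
      | (B) u v where "u |\<in>| L" "\<forall>h\<in>set u. fst (snd h)" "v |\<in>| K" "w |\<in>| dw a v"
      by (auto simp: mem_Dl mem_PWmap Ow_def split: if_splits simp del: wprod.simps)
    then show "w |\<in>| Dl a (wprod [L, K])"
    proof cases
      case A then show ?thesis unfolding mem_Dl mem_wprod2
        by (intro exI[of _ "u @ v"]) (auto simp: mem_dw_app simp del: wprod.simps)
    next
      case B then show ?thesis unfolding mem_Dl mem_wprod2
        by (intro exI[of _ "u @ v"]) (auto simp: mem_dw_app simp del: wprod.simps)
    qed
  qed
qed

lemma Ob_iq: "Ob t = Ow (iq t)"
proof (induction t)
  case (Var h) then show ?case by (simp add: Hmap_def Fmap_def del: iq.simps add: iq.simps(1))
next
  case (Op s) then show ?case
    by (cases s) (simp_all del: lam.simps wprod.simps iq.simps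
                    add: lam_zero lam_one lam_plus lam_times)
qed

lemma D_iq: "iq (D t a) = Dl a (iq t)"
proof (induction t)
  case (Var h) then show ?case by (simp add: Hmap_def Fmap_def del: iq.simps add: iq.simps(1))
next
  case (Op s) then show ?case
    by (cases s) (simp_all del: lam.simps wprod.simps iq.simps
                    add: lam_zero lam_one lam_plus lam_times Dl_times Ob_iq fst_lam iq_map)
qed

lemma lam_K: "Hmap iq (lam t) = Kf (iq t)"
  by (simp add: Hmap_def Fmap_def Kf_def fun_eq_iff D_iq Ob_iq fst_lam iq_map del: iq.simps)

primrec pw :: "'x list \<Rightarrow> 'x trm" where
  "pw [] = tone"
| "pw (x # w) = ttimes (Var x) (pw w)"

lemma iq_pw: "iq (pw w) = {|w|}"
proof (induction w)
  case (Cons x w) then show ?case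
    by (intro fset_eqI) (simp del: wprod.simps iq.simps add: iq.simps(1))
qed simp

lemma iq_surj: "\<exists>t. iq t = L"
proof (induction L rule: fset_induct)
  case empty then show ?case by (intro exI[of _ tzero]) simp
next
  case (insert w L)
  then obtain t where "iq t = L" by blast
  then show ?case by (intro exI[of _ "tplus (pw w) t"]) (simp add: iq_pw del: iq.simps)
qed

lemma kappa_iq: "kappa (iq t) = Hmap iq (lam t)"
proof -
  have "iq (SOME t'. iq t' = iq t) = iq t" by (rule someI_ex) blast
  then show ?thesis unfolding kappa_def lam_K by simp
qed


lemma PWmap_comp[simp]: "PWmap f (PWmap g L) = PWmap (f \<circ> g) L"
  by (simp add: PWmap_def fset.map_comp o_def)
lemma PWmap_id[simp]: "PWmap (\<lambda>x. x) L = L"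
  by (simp add: PWmap_def)

lemma kappa_mult:
  fixes M :: "('a, 'x) H PW PW"
  shows "kappa (PWmult M) = Hmap PWmult (kappa (PWmap kappa M))"
proof -
  obtain T where T: "iq T = M" using iq_surj by blast
  define g where "g L = (SOME t. iq t = L)" for L :: "('a, 'x) H PW"
  have ig: "iq \<circ> g = (\<lambda>x. x)" unfolding g_def
    by (rule ext, simp, rule someI_ex, rule iq_surj)
  define tt where "tt = map_trm g T"
  have M: "M = PWmap iq (iq tt)" unfolding tt_def iq_map T by (simp add: ig)
  have "kappa (PWmult M) = kappa (iq (tjoin tt))" by (simp add: M iq_join del: iq.simps)
  also have "\<dots> = Hmap (iq \<circ> tjoin) (lam (map_trm lam tt))"
    by (simp add: kappa_iq lam_mult del: iq.simps)
  finally have L: "kappa (PWmult M) = Hmap (iq \<circ> tjoin) (lam (map_trm lam tt))" .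
  have ki: "kappa \<circ> iq = Hmap iq \<circ> lam" by (rule ext) (simp add: kappa_iq del: iq.simps)
  have "PWmap kappa M = PWmap (Hmap iq \<circ> lam) (iq tt)" by (simp add: M ki del: iq.simps)
  also have "\<dots> = iq (map_trm (Hmap iq) (map_trm lam tt))"
    by (simp add: iq_map del: iq.simps)
  finally have "kappa (PWmap kappa M) = Hmap iq (Hmap (map_trm iq) (lam (map_trm lam tt)))"
    by (simp add: kappa_iq lam_nat del: iq.simps Hmap_comp)
  then have R: "Hmap PWmult (kappa (PWmap kappa M)) = Hmap (PWmult \<circ> iq \<circ> map_trm iq) (lam (map_trm lam tt))"
    by (simp add: o_assoc)
  have e: "PWmult \<circ> iq \<circ> map_trm iq = iq \<circ> tjoin"
    by (rule ext) (simp add: iq_map iq_join del: iq.simps)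
  show ?thesis by (simp only: L R e)
qed

theorem mainTheorem11:
  fixes f :: "'x \<Rightarrow> 'y"
  shows
    "(\<forall>(t1, t2) \<in> isr_axioms. preserves_axiom t1 t2 TYPE('x) TYPE('a))
   \<and> (\<forall>t :: 'x trm. iq (map_trm f t) = PWmap f (iq t))
   \<and> (\<forall>x :: 'x. iq (Var x) = PWunit x)
   \<and> (\<forall>tt :: 'x trm trm. iq (tjoin tt) = PWmult (PWmap iq (iq tt)))
   \<and> (\<forall>L :: ('a, 'x) H PW. kappa (PWmap (Hmap f) L) = Hmap (PWmap f) (kappa L))
   \<and> (\<forall>h :: ('a, 'x) H. kappa (PWunit h) = Hmap PWunit h)
   \<and> (\<forall>M :: ('a, 'x) H PW PW. kappa (PWmult M) = Hmap PWmult (kappa (PWmap kappa M)))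
   \<and> (\<forall>L :: ('a, 'x) H PW. fst (kappa L) = PWmap fst L)
   \<and> (\<forall>t :: ('a, 'x) H trm. kappa (iq t) = Hmap iq (lam t))"
proof (intro conjI allI)
  show "\<forall>(t1, t2) \<in> isr_axioms. preserves_axiom t1 t2 TYPE('x) TYPE('a)" by (rule part1)
next
  fix t :: "'x trm" show "iq (map_trm f t) = PWmap f (iq t)" by (rule iq_map)
next
  fix x :: 'x show "iq (Var x) = PWunit x" by simp
next
  fix tt :: "'x trm trm" show "iq (tjoin tt) = PWmult (PWmap iq (iq tt))" by (rule iq_join)
next
  fix L :: "('a, 'x) H PW"
  obtain t where t: "iq t = L" using iq_surj by blast
  have "kappa (PWmap (Hmap f) L) = kappa (iq (map_trm (Hmap f) t))" by (simp add: t iq_map del: iq.simps)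
  also have "\<dots> = Hmap (iq \<circ> map_trm f) (lam t)" by (simp add: kappa_iq lam_nat del: iq.simps)
  also have "iq \<circ> map_trm f = PWmap f \<circ> iq" by (rule ext) (simp add: iq_map del: iq.simps)
  also have "Hmap (PWmap f \<circ> iq) (lam t) = Hmap (PWmap f) (kappa L)"
    by (simp add: kappa_iq t[symmetric] del: iq.simps)
  finally show "kappa (PWmap (Hmap f) L) = Hmap (PWmap f) (kappa L)" .
next
  fix h :: "('a, 'x) H"
  have "kappa (iq (Var h)) = Hmap iq (lam (Var h))" by (rule kappa_iq)
  then show "kappa (PWunit h) = Hmap PWunit h" by (simp add: kappa_iq o_def)
next
  fix M :: "('a, 'x) H PW PW" show "kappa (PWmult M) = Hmap PWmult (kappa (PWmap kappa M))"
    by (rule kappa_mult)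
next
  fix L :: "('a, 'x) H PW"
  obtain t where t: "iq t = L" using iq_surj by blast
  show "fst (kappa L) = PWmap fst L"
    by (simp add: t[symmetric] kappa_iq Hmap_def fst_lam iq_map del: iq.simps)
next
  fix t :: "('a, 'x) H trm" show "kappa (iq t) = Hmap iq (lam t)" by (rule kappa_iq)
qed

end
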